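(* Let $D\ge1$, let $Q_D$ be the $D$-dimensional hypercube on $X=\{0,1\}^D$ with adjacency matrix $A$. For $1\le i<j\le D$ put $B_{ij}=\alpha^*_iA\alpha^*_j-\alpha^*_jA\alpha^*_i$, and let $1\le \ell\le D$. (i) If $\ell=i$ or $\ell=j$, then $B_{ij}\alpha_\ell=-\alpha_\ell B_{ij}$. (ii) If $\ell\ne i$ and $\ell\ne j$, then $B_{ij}\alpha_\ell=\alpha_\ell B_{ij}$.
   Context: $Q_D$ is the graph with vertex set $X=\{0,1\}^D$, two vertices adjacent iff they differ in exactly one coordinate. Matrices are real with rows and columns indexed by $X$. For $1\le i\le D$, $\alpha_i$ has $(x,y)$-entry $1$ if $x,y$ differ in the $i$-th coordinate and agree in all others, and $0$ otherwise; $\alpha^*_i$ is the diagonal matrix with $(x,x)$-entry $1$ if $x_i=0$ and $-1$ if $x_i=1$. *)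

theory Defs
  imports Complex_Main
begin

(* Vertices of Q_D: bool lists of length D; coordinate i (1 <= i <= D) of x is x ! (i - 1),
   with False = 0 and True = 1.  Matrices indexed by X are functions X => X => real;
   only their entries on X x X are meaningful. *)

definition cube :: "nat \<Rightarrow> bool list set" where
  "cube D = {x. length x = D}"

type_synonym mat = "bool list \<Rightarrow> bool list \<Rightarrow> real"

definition mmult :: "nat \<Rightarrow> mat \<Rightarrow> mat \<Rightarrow> mat" where
  "mmult D M N = (\<lambda>x y. \<Sum>z\<in>cube D. M x z * N z y)"

definition msub :: "mat \<Rightarrow> mat \<Rightarrow> mat" where
  "msub M N = (\<lambda>x y. M x y - N x y)"

definition adjQ :: "nat \<Rightarrow> mat" where
  "adjQ D = (\<lambda>x y. if card {k\<in>{1..D}. x ! (k - 1) \<noteq> y ! (k - 1)} = 1 then 1 else 0)"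

definition alpha :: "nat \<Rightarrow> nat \<Rightarrow> mat" where
  "alpha D i = (\<lambda>x y. if x ! (i - 1) \<noteq> y ! (i - 1) \<and>
                          (\<forall>k\<in>{1..D} - {i}. x ! (k - 1) = y ! (k - 1)) then 1 else 0)"

definition alpha_star :: "nat \<Rightarrow> mat" where
  "alpha_star i = (\<lambda>x y. if x = y then (if \<not> x ! (i - 1) then 1 else -1) else 0)"

definition Bmat :: "nat \<Rightarrow> nat \<Rightarrow> nat \<Rightarrow> mat" where
  "Bmat D i j = msub (mmult D (mmult D (alpha_star i) (adjQ D)) (alpha_star j))
                     (mmult D (mmult D (alpha_star j) (adjQ D)) (alpha_star i))"

end

theory Submission
  imports Defs
begin

definition flip :: "nat \<Rightarrow> bool list \<Rightarrow> bool list" where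
  "flip l x = x[l - 1 := \<not> x ! (l - 1)]"

definition sg :: "nat \<Rightarrow> bool list \<Rightarrow> real" where
  "sg i x = (if x ! (i - 1) then -1 else 1)"

lemma finite_cube[simp]: "finite (cube D)"
proof -
  have "cube D = {xs. set xs \<subseteq> (UNIV::bool set) \<and> length xs = D}" by (auto simp: cube_def)
  then show ?thesis using finite_lists_length_eq[of "UNIV::bool set" D] by simp
qed

lemma flip_cube: "x \<in> cube D \<Longrightarrow> flip l x \<in> cube D"
  by (simp add: cube_def flip_def)

lemma flip_nth: "x \<in> cube D \<Longrightarrow> 1 \<le> l \<Longrightarrow> l \<le> D \<Longrightarrow> 1 \<le> k \<Longrightarrow> k \<le> D \<Longrightarrow>
   flip l x ! (k - 1) = (if k = l then \<not> x ! (k - 1) else x ! (k - 1))"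
  by (auto simp: cube_def flip_def nth_list_update)

lemma alpha_eq:
  assumes "z \<in> cube D" "y \<in> cube D" "1 \<le> l" "l \<le> D"
  shows "alpha D l z y = (if z = flip l y then 1 else 0)"
proof -
  have "(z ! (l - 1) \<noteq> y ! (l - 1) \<and> (\<forall>k\<in>{1..D} - {l}. z ! (k - 1) = y ! (k - 1)))
        = (z = flip l y)"
  proof
    assume h: "z ! (l - 1) \<noteq> y ! (l - 1) \<and> (\<forall>k\<in>{1..D} - {l}. z ! (k - 1) = y ! (k - 1))"
    show "z = flip l y"
    proof (rule nth_equalityI)
      show "length z = length (flip l y)" using assms by (simp add: cube_def flip_def)
      fix m assume m: "m < length z"
      then have m': "m < D" using assms by (simp add: cube_def)
      have "flip l y ! (Suc m - 1) = (if Suc m = l then \<not> y ! (Suc m - 1) else y ! (Suc m - 1))"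
        using flip_nth[OF assms(2) assms(3) assms(4), of "Suc m"] m' by simp
      show "z ! m = flip l y ! m"
      proof (cases "Suc m = l")
        case True
        then show ?thesis using h \<open>flip l y ! (Suc m - 1) = _\<close> by (cases "z ! m") auto
      next
        case False
        then have "Suc m \<in> {1..D} - {l}" using m' by auto
        then have "z ! (Suc m - 1) = y ! (Suc m - 1)" using h by blast
        then show ?thesis using False \<open>flip l y ! (Suc m - 1) = _\<close> by simp
      qed
    qed
  next
    assume h: "z = flip l y"
    show "z ! (l - 1) \<noteq> y ! (l - 1) \<and> (\<forall>k\<in>{1..D} - {l}. z ! (k - 1) = y ! (k - 1))"
      using h flip_nth[OF assms(2) assms(3) assms(4)] assms by auto
  qed
  then show ?thesis by (simp add: alpha_def)
qed

lemma alpha_sym: "alpha D l z y = alpha D l y z"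
proof -
  have "(z ! (l - 1) \<noteq> y ! (l - 1) \<and> (\<forall>k\<in>{1..D} - {l}. z ! (k - 1) = y ! (k - 1))) =
        (y ! (l - 1) \<noteq> z ! (l - 1) \<and> (\<forall>k\<in>{1..D} - {l}. y ! (k - 1) = z ! (k - 1)))" by auto
  then show ?thesis unfolding alpha_def by simp
qed

lemma mult_alpha_right:
  assumes "y \<in> cube D" "1 \<le> l" "l \<le> D"
  shows "mmult D M (alpha D l) x y = M x (flip l y)"
proof -
  have "mmult D M (alpha D l) x y = (\<Sum>z\<in>cube D. if z = flip l y then M x z else 0)"
    unfolding mmult_def proof (intro sum.cong refl)
    fix z assume "z \<in> cube D"
    then show "M x z * alpha D l z y = (if z = flip l y then M x z else 0)"
      using alpha_eq[of z D y l] assms by simp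
  qed
  also have "\<dots> = M x (flip l y)" using flip_cube[OF assms(1)] by simp
  finally show ?thesis .
qed

lemma mult_alpha_left:
  assumes "x \<in> cube D" "1 \<le> l" "l \<le> D"
  shows "mmult D (alpha D l) M x y = M (flip l x) y"
proof -
  have "mmult D (alpha D l) M x y = (\<Sum>z\<in>cube D. if z = flip l x then M z y else 0)"
    unfolding mmult_def proof (intro sum.cong refl)
    fix z assume "z \<in> cube D"
    then show "alpha D l x z * M z y = (if z = flip l x then M z y else 0)"
      using alpha_eq[of z D x l] alpha_sym[of D l x z] assms by simp
  qed
  also have "\<dots> = M (flip l x) y" using flip_cube[OF assms(1)] by simp
  finally show ?thesis .
qed

lemma mult_star_left:
  assumes "x \<in> cube D"
  shows "mmult D (alpha_star i) M x y = sg i x * M x y"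
proof -
  have "mmult D (alpha_star i) M x y = (\<Sum>z\<in>cube D. if x = z then sg i x * M z y else 0)"
    unfolding mmult_def by (rule sum.cong) (auto simp: alpha_star_def sg_def)
  also have "\<dots> = sg i x * M x y" using assms by simp
  finally show ?thesis .
qed

lemma mult_star_right:
  assumes "y \<in> cube D"
  shows "mmult D M (alpha_star j) x y = M x y * sg j y"
proof -
  have "mmult D M (alpha_star j) x y = (\<Sum>z\<in>cube D. if z = y then M x z * sg j y else 0)"
    unfolding mmult_def by (rule sum.cong) (auto simp: alpha_star_def sg_def)
  also have "\<dots> = M x y * sg j y" using assms by simp
  finally show ?thesis .
qed

lemma B_eq:
  assumes "x \<in> cube D" "y \<in> cube D"
  shows "Bmat D i j x y = adjQ D x y * (sg i x * sg j y - sg j x * sg i y)"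
  unfolding Bmat_def msub_def
  using assms by (simp add: mult_star_left mult_star_right algebra_simps)

lemma adj_flip:
  assumes "x \<in> cube D" "y \<in> cube D" "1 \<le> l" "l \<le> D"
  shows "adjQ D x (flip l y) = adjQ D (flip l x) y"
proof -
  have "{k\<in>{1..D}. x ! (k - 1) \<noteq> flip l y ! (k - 1)} = {k\<in>{1..D}. flip l x ! (k - 1) \<noteq> y ! (k - 1)}"
  proof (rule Collect_cong)
    fix k
    show "(k \<in> {1..D} \<and> x ! (k - 1) \<noteq> flip l y ! (k - 1)) = (k \<in> {1..D} \<and> flip l x ! (k - 1) \<noteq> y ! (k - 1))"
    proof (cases "k \<in> {1..D}")
      case True
      then show ?thesis
        using flip_nth[OF assms(1) assms(3) assms(4), of k] flip_nth[OF assms(2) assms(3) assms(4), of k]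
        by (cases "k = l") auto
    qed auto
  qed
  then show ?thesis unfolding adjQ_def by presburger
qed

lemma sg_flip:
  assumes "x \<in> cube D" "1 \<le> l" "l \<le> D" "1 \<le> i" "i \<le> D"
  shows "sg i (flip l x) = (if i = l then - sg i x else sg i x)"
  using flip_nth[OF assms] by (simp add: sg_def)

theorem lemma9p4:
  fixes D i j l :: nat
  assumes "1 \<le> D" and "1 \<le> i" and "i < j" and "j \<le> D" and "1 \<le> l" and "l \<le> D"
  shows "(l = i \<or> l = j \<longrightarrow>
            (\<forall>x\<in>cube D. \<forall>y\<in>cube D.
               mmult D (Bmat D i j) (alpha D l) x y = - mmult D (alpha D l) (Bmat D i j) x y))
       \<and> (l \<noteq> i \<and> l \<noteq> j \<longrightarrow>
            (\<forall>x\<in>cube D. \<forall>y\<in>cube D.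
               mmult D (Bmat D i j) (alpha D l) x y = mmult D (alpha D l) (Bmat D i j) x y))"
proof -
  have key: "mmult D (Bmat D i j) (alpha D l) x y =
             adjQ D (flip l x) y * (sg i x * sg j (flip l y) - sg j x * sg i (flip l y))"
    "mmult D (alpha D l) (Bmat D i j) x y =
             adjQ D (flip l x) y * (sg i (flip l x) * sg j y - sg j (flip l x) * sg i y)"
    if "x \<in> cube D" "y \<in> cube D" for x y
    using that assms flip_cube adj_flip
    by (simp_all add: mult_alpha_right mult_alpha_left B_eq)
  have ij: "1 \<le> j" "i \<le> D" using assms by auto
  show ?thesis
    using assms ij
    by (auto simp: key sg_flip algebra_simps)
qed

end
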